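(* Let $d$ be a positive integer and let $\{\mathcal{F}^{(n)}\}_{n\in\mathbb{N}}$ be a sequence of degree-$d$ factors, all with the same dimension vector $(M_1,\dots,M_d)$. Then there exists a fully regular sequence $\{\mathcal{H}^{(n)}\}_{n\in\mathbb{N}}$ of degree-$d$ factors that is a refinement of $\{\mathcal{F}^{(n)}\}$.
   Context: A degree-$d$ factor is a tuple $(P_1,\dots,P_K)$ of polynomials $\mathbb{F}_2^{m}\to\mathbb{F}_2$ (for some $m$, which may depend on $n$ in a sequence) of degree at most $d$; its dimension vector is $(M_1,\dots,M_d)$ where $M_\ell$ is the number of $P_i$ of degree exactly $\ell$, and $K=\sum_\ell M_\ell$. For $P$ not identically zero and $\ell\ge1$, $\operatorname{rank}_{\ell}(P)$ is the smallest positive integer $k$ with $P=\Gamma(Q_1,\dots,Q_k)$ for polynomials $Q_j$ of degree at most $\ell$ and some $\Gamma\colon\mathbb{F}_2^k\to\mathbb{F}_2$. A factor is $r$-regular if every nonzero linear combination $\sum_i\lambda_iP_i$ has $\operatorname{rank}_{\ell-1}>r$, where $\ell=\max_i\deg(\lambda_iP_i)$. A sequence of factors $\{\mathcal{F}^{(n)}\}$ is $r$-regular if there is $N_0$ such that $\mathcal{F}^{(n)}$ is $r$-regular for all $n\ge N_0$, and fully regular if it is $r$-regular for every $r\in\mathbb{N}$. In a sequence of factors, all factors have the same degree bound and the same dimension vector. A sequence $\{\mathcal{G}^{(n)}\}$ (of dimension $L$) refines $\{\mathcal{F}^{(n)}\}$ (of dimension $K$) if there are a strictly increasing $g\colon\mathbb{N}\to\mathbb{N}$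 and a single $\Gamma\colon\mathbb{F}_2^L\to\mathbb{F}_2^K$ such that $\Gamma(\mathcal{G}^{(n)})=\mathcal{F}^{(g(n))}$ as functions for all $n$. *)

theory Defs
  imports Main
begin

text \<open>Points of F_2^m are represented by their supports: subsets x of {..<m}.
  A function F_2^m \<rightarrow> F_2 is a map P :: nat set \<Rightarrow> bool, of which only
  the values on subsets of {..<m} matter (True = 1, False = 0).\<close>

definition monomial_sum :: "nat set set \<Rightarrow> nat set \<Rightarrow> bool" where
  "monomial_sum C x = odd (card {S \<in> C. S \<subseteq> x})"

definition deg_le :: "nat \<Rightarrow> (nat set \<Rightarrow> bool) \<Rightarrow> nat \<Rightarrow> bool" where
  "deg_le m P d \<longleftrightarrow> (\<exists>C. C \<subseteq> Pow {..<m} \<and> (\<forall>S\<in>C. card S \<le> d) \<and>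
       (\<forall>x. x \<subseteq> {..<m} \<longrightarrow> P x = monomial_sum C x))"

definition poly_deg :: "nat \<Rightarrow> (nat set \<Rightarrow> bool) \<Rightarrow> nat" where
  "poly_deg m P = (LEAST d. deg_le m P d)"

text \<open>rank_l(P) \<le> r: P = Gamma(Q_1,...,Q_k) for some 1 \<le> k \<le> r, deg Q_j \<le> l.
  (If no such representation exists for any k, the rank is infinite.)\<close>
definition rank_le :: "nat \<Rightarrow> nat \<Rightarrow> (nat set \<Rightarrow> bool) \<Rightarrow> nat \<Rightarrow> bool" where
  "rank_le m l P r \<longleftrightarrow> (\<exists>k Q \<Gamma>. 1 \<le> k \<and> k \<le> r \<and>
       (\<forall>j<k. deg_le m (Q j) l) \<and>
       (\<forall>x. x \<subseteq> {..<m} \<longrightarrow> P x = \<Gamma> (\<lambda>j. if j < k then Q j x else False)))"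

definition lin_comb :: "nat set \<Rightarrow> (nat \<Rightarrow> nat set \<Rightarrow> bool) \<Rightarrow> nat set \<Rightarrow> bool" where
  "lin_comb Lam P x = odd (card {i \<in> Lam. P i x})"

definition is_factor :: "nat \<Rightarrow> nat \<Rightarrow> (nat \<Rightarrow> nat) \<Rightarrow> nat \<Rightarrow> (nat \<Rightarrow> nat set \<Rightarrow> bool) \<Rightarrow> bool" where
  "is_factor d K M m P \<longleftrightarrow>
     (\<forall>i<K. deg_le m (P i) d) \<and>
     (\<forall>l\<in>{1..d}. card {i. i < K \<and> deg_le m (P i) l \<and> \<not> deg_le m (P i) (l - 1)} = M l) \<and>
     K = (\<Sum>l=1..d. M l)"

definition factor_regular :: "nat \<Rightarrow> nat \<Rightarrow> nat \<Rightarrow> (nat \<Rightarrow> nat set \<Rightarrow> bool) \<Rightarrow> bool" where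
  "factor_regular r K m P \<longleftrightarrow>
     (\<forall>Lam. Lam \<subseteq> {..<K} \<longrightarrow> Lam \<noteq> {} \<longrightarrow>
        \<not> rank_le m (Max ((\<lambda>i. poly_deg m (P i)) ` Lam) - 1) (lin_comb Lam P) r)"

definition seq_regular :: "nat \<Rightarrow> nat \<Rightarrow> (nat \<Rightarrow> nat) \<Rightarrow> (nat \<Rightarrow> nat \<Rightarrow> nat set \<Rightarrow> bool) \<Rightarrow> bool" where
  "seq_regular r K m F \<longleftrightarrow> (\<exists>N0. \<forall>n\<ge>N0. factor_regular r K (m n) (F n))"

definition fully_regular :: "nat \<Rightarrow> (nat \<Rightarrow> nat) \<Rightarrow> (nat \<Rightarrow> nat \<Rightarrow> nat set \<Rightarrow> bool) \<Rightarrow> bool" where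
  "fully_regular K m F \<longleftrightarrow> (\<forall>r. seq_regular r K m F)"

definition refines :: "nat \<Rightarrow> (nat \<Rightarrow> nat) \<Rightarrow> (nat \<Rightarrow> nat \<Rightarrow> nat set \<Rightarrow> bool) \<Rightarrow>
                       nat \<Rightarrow> (nat \<Rightarrow> nat) \<Rightarrow> (nat \<Rightarrow> nat \<Rightarrow> nat set \<Rightarrow> bool) \<Rightarrow> bool" where
  "refines L mG G K mF F \<longleftrightarrow> (\<exists>g \<Gamma>. strict_mono (g :: nat \<Rightarrow> nat) \<and>
     (\<forall>n. mG n = mF (g n) \<and>
        (\<forall>x. x \<subseteq> {..<mG n} \<longrightarrow> (\<forall>i<K.
            F (g n) i x = \<Gamma> (\<lambda>j. if j < L then G n j x else False) i))))"

end

theory Submission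
  imports Defs "HOL-Library.Multiset_Order" "HOL-Library.Infinite_Set"
begin

lemma deg_le_mono: "deg_le m P d \<Longrightarrow> d \<le> d' \<Longrightarrow> deg_le m P d'"
  unfolding deg_le_def by (meson order_trans)

lemma poly_deg_le: "deg_le m P d \<Longrightarrow> poly_deg m P \<le> d"
  unfolding poly_deg_def by (rule Least_le)

lemma deg_le_poly_deg: "deg_le m P d \<Longrightarrow> deg_le m P (poly_deg m P)"
  unfolding poly_deg_def by (rule LeastI)

lemma deg_exact:
  assumes "deg_le m P d" "1 \<le> l"
  shows "(deg_le m P l \<and> \<not> deg_le m P (l - 1)) \<longleftrightarrow> poly_deg m P = l"
proof
  assume h: "deg_le m P l \<and> \<not> deg_le m P (l - 1)"
  have "poly_deg m P \<le> l" using h poly_deg_le by blast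
  moreover have "\<not> poly_deg m P \<le> l - 1"
    using h deg_le_mono deg_le_poly_deg by blast
  ultimately show "poly_deg m P = l" by linarith
next
  assume h: "poly_deg m P = l"
  have "deg_le m P l" using h deg_le_poly_deg assms(1) by blast
  moreover have "\<not> deg_le m P (l - 1)"
    using h poly_deg_le assms(2) by fastforce
  ultimately show "deg_le m P l \<and> \<not> deg_le m P (l - 1)" by blast
qed

lemma deg0_const:
  assumes "deg_le m P 0" "x \<subseteq> {..<m}"
  shows "P x = P {}"
proof -
  obtain C where C: "C \<subseteq> Pow {..<m}" "\<forall>S\<in>C. card S \<le> 0"
    "\<forall>x. x \<subseteq> {..<m} \<longrightarrow> P x = monomial_sum C x"
    using assms(1) unfolding deg_le_def by blast
  have e: "\<forall>S\<in>C. S = {}"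
  proof
    fix S assume "S \<in> C"
    then have "finite S" "card S = 0" using C by (auto intro: finite_subset)
    then show "S = {}" by simp
  qed
  have "{S \<in> C. S \<subseteq> x} = {S \<in> C. S \<subseteq> {}}" using e by auto
  then have "monomial_sum C x = monomial_sum C {}" unfolding monomial_sum_def by simp
  then show ?thesis using C(3) assms(2) by simp
qed

lemma deg_exact_set:
  assumes "\<forall>i<K. deg_le m (P i) d" "1 \<le> l"
  shows "{i. i < K \<and> deg_le m (P i) l \<and> \<not> deg_le m (P i) (l - 1)} = {i. i < K \<and> poly_deg m (P i) = l}"
proof (rule Collect_cong)
  fix i
  show "(i < K \<and> deg_le m (P i) l \<and> \<not> deg_le m (P i) (l - 1)) = (i < K \<and> poly_deg m (P i) = l)"
  proof (cases "i < K")
    case True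
    show ?thesis using deg_exact[OF assms(1)[rule_format, OF True] assms(2)] True by simp
  qed simp
qed

lemma card_partition:
  fixes d :: nat
  assumes "finite A" "f ` A \<subseteq> {1..d}"
  shows "(\<Sum>l=1..d. card {i\<in>A. f i = l}) = card A"
proof -
  have "(\<Sum>l\<in>{1..d}. sum (\<lambda>_. 1::nat) {i\<in>A. f i = l}) = sum (\<lambda>_. 1) A"
    by (rule sum.group[OF assms(1) _ assms(2)]) simp
  then show ?thesis by simp
qed

lemma factor_degs:
  assumes "is_factor d K M m P" "i < K"
  shows "1 \<le> poly_deg m (P i) \<and> poly_deg m (P i) \<le> d"
proof -
  let ?A = "\<lambda>l. {i. i < K \<and> poly_deg m (P i) = l}"
  have dl: "\<forall>i<K. deg_le m (P i) d" using assms(1) unfolding is_factor_def by blast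
  have cM: "\<forall>l\<in>{1..d}. card (?A l) = M l"
  proof
    fix l assume l: "l \<in> {1..d}"
    have "{i. i < K \<and> deg_le m (P i) l \<and> \<not> deg_le m (P i) (l - 1)} = ?A l"
      using dl l by (intro deg_exact_set) auto
    moreover have cnt: "\<forall>l\<in>{1..d}. card {i. i < K \<and> deg_le m (P i) l \<and> \<not> deg_le m (P i) (l - 1)} = M l"
      using assms(1) unfolding is_factor_def by blast
    ultimately show "card (?A l) = M l" using cnt[rule_format, OF l] by simp
  qed
  have K: "K = (\<Sum>l=1..d. M l)" using assms(1) unfolding is_factor_def by blast
  let ?B = "{i. i < K \<and> poly_deg m (P i) \<in> {1..d}}"
  have "card ?B = (\<Sum>l=1..d. card {i\<in>?B. poly_deg m (P i) = l})"
    by (rule card_partition[symmetric]) auto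
  also have "\<dots> = (\<Sum>l=1..d. M l)"
  proof (rule sum.cong)
    fix l assume l: "l \<in> {1..d}"
    have "{i\<in>?B. poly_deg m (P i) = l} = ?A l" using l by auto
    then show "card {i\<in>?B. poly_deg m (P i) = l} = M l" using cM l by simp
  qed simp
  finally have "card ?B = card {..<K}" using K by simp
  moreover have "?B \<subseteq> {..<K}" by auto
  ultimately have "?B = {..<K}" using card_subset_eq[of "{..<K}" ?B] by simp
  then show ?thesis using assms(2) by auto
qed

lemma factor_count:
  assumes "is_factor d K M m P" "l \<in> {1..d}"
  shows "card {i. i < K \<and> poly_deg m (P i) = l} = M l"
proof -
  have dl: "\<forall>i<K. deg_le m (P i) d" using assms(1) unfolding is_factor_def by blast
  have "{i. i < K \<and> deg_le m (P i) l \<and> \<not> deg_le m (P i) (l - 1)} = {i. i < K \<and> poly_deg m (P i) = l}"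
    using dl assms(2) by (intro deg_exact_set) auto
  moreover have cnt: "\<forall>l\<in>{1..d}. card {i. i < K \<and> deg_le m (P i) l \<and> \<not> deg_le m (P i) (l - 1)} = M l"
    using assms(1) unfolding is_factor_def by blast
  ultimately show ?thesis using cnt[rule_format, OF assms(2)] by simp
qed

lemma factor_intro:
  assumes "\<forall>i<L. deg_le m (P i) d \<and> 1 \<le> poly_deg m (P i)"
  shows "is_factor d L (\<lambda>l. card {i. i < L \<and> poly_deg m (P i) = l}) m P"
  unfolding is_factor_def
proof (intro conjI ballI allI impI)
  fix i assume "i < L" then show "deg_le m (P i) d" using assms by blast
next
  fix l assume l: "l \<in> {1..d}"
  have "{i. i < L \<and> deg_le m (P i) l \<and> \<not> deg_le m (P i) (l - 1)} = {i. i < L \<and> poly_deg m (P i) = l}"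
    using assms l by (intro deg_exact_set) auto
  then show "card {i. i < L \<and> deg_le m (P i) l \<and> \<not> deg_le m (P i) (l - 1)} = card {i. i < L \<and> poly_deg m (P i) = l}"
    by simp
next
  have "(\<Sum>l=1..d. card {i\<in>{..<L}. poly_deg m (P i) = l}) = card {..<L}"
    by (rule card_partition) (use assms poly_deg_le in fastforce)+
  then show "L = (\<Sum>l = 1..d. card {i. i < L \<and> poly_deg m (P i) = l})" by simp
qed

definition dm :: "nat \<Rightarrow> (nat \<Rightarrow> nat) \<Rightarrow> nat multiset" where
  "dm d M = (\<Sum>l\<in>{1..d}. replicate_mset (M l) l)"

lemma count_img:
  assumes "finite A"
  shows "count (image_mset f (mset_set A)) x = card {a\<in>A. f a = x}"
  using assms
proof (induction A rule: finite_induct)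
  case empty then show ?case by simp
next
  case (insert a A)
  have "{b\<in>insert a A. f b = x} = (if f a = x then insert a {b\<in>A. f b = x} else {b\<in>A. f b = x})"
    by auto
  then show ?case using insert by auto
qed

lemma count_dm: "count (dm d M) x = (if x \<in> {1..d} then M x else 0)"
  unfolding dm_def
  by (simp add: count_sum if_distrib sum.delta cong: if_cong)

lemma factor_dm:
  assumes "is_factor d K M m P"
  shows "image_mset (\<lambda>i. poly_deg m (P i)) (mset_set {..<K}) = dm d M"
proof (rule multiset_eqI)
  fix x
  have "count (image_mset (\<lambda>i. poly_deg m (P i)) (mset_set {..<K})) x
        = card {i\<in>{..<K}. poly_deg m (P i) = x}" by (simp add: count_img)
  also have "\<dots> = (if x \<in> {1..d} then M x else 0)"
  proof (cases "x \<in> {1..d}")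
    case True
    have "{i\<in>{..<K}. poly_deg m (P i) = x} = {i. i < K \<and> poly_deg m (P i) = x}" by auto
    then show ?thesis using factor_count[OF assms True] True by simp
  next
    case False
    have "{i\<in>{..<K}. poly_deg m (P i) = x} = {}"
      using factor_degs[OF assms] False by fastforce
    then show ?thesis using False by force
  qed
  finally show "count (image_mset (\<lambda>i. poly_deg m (P i)) (mset_set {..<K})) x = count (dm d M) x"
    by (simp add: count_dm)
qed

lemma refines_refl: "refines K m F K m F"
  unfolding refines_def
  by (rule exI[of _ id], rule exI[of _ "\<lambda>v. v"]) (simp add: strict_mono_def)

lemma refines_trans:
  assumes "refines L mH H L' mG G" "refines L' mG G K mF F"
  shows "refines L mH H K mF F"
proof -
  obtain g1 \<Gamma>1 where 1: "strict_mono g1" "\<forall>n. mG n = mF (g1 n) \<and>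
        (\<forall>x. x \<subseteq> {..<mG n} \<longrightarrow> (\<forall>i<K.
            F (g1 n) i x = \<Gamma>1 (\<lambda>j. if j < L' then G n j x else False) i))"
    using assms(2) unfolding refines_def by blast
  obtain g2 \<Gamma>2 where 2: "strict_mono g2" "\<forall>n. mH n = mG (g2 n) \<and>
        (\<forall>x. x \<subseteq> {..<mH n} \<longrightarrow> (\<forall>i<L'.
            G (g2 n) i x = \<Gamma>2 (\<lambda>j. if j < L then H n j x else False) i))"
    using assms(1) unfolding refines_def by blast
  show ?thesis unfolding refines_def
  proof (intro exI conjI allI impI)
    show "strict_mono (g1 \<circ> g2)" using 1(1) 2(1) by (simp add: strict_mono_def)
  next
    fix n show "mH n = mF ((g1 \<circ> g2) n)" using 1 2 by simp
  next
    fix n x i assume x: "x \<subseteq> {..<mH n}" and i: "i < K"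
    have e: "(\<lambda>j. if j < L' then G (g2 n) j x else False) =
       (\<lambda>j. if j < L' then \<Gamma>2 (\<lambda>j. if j < L then H n j x else False) j else False)"
      using 2(2) x by auto
    have "F ((g1 \<circ> g2) n) i x = \<Gamma>1 (\<lambda>j. if j < L' then G (g2 n) j x else False) i"
      using 1(2) 2(2) x i by simp
    also have "\<dots> = (\<lambda>v. \<Gamma>1 (\<lambda>j. if j < L' then \<Gamma>2 v j else False)) (\<lambda>j. if j < L then H n j x else False) i"
      using e by simp
    finally show "F ((g1 \<circ> g2) n) i x = (\<lambda>v. \<Gamma>1 (\<lambda>j. if j < L' then \<Gamma>2 v j else False)) (\<lambda>j. if j < L then H n j x else False) i" .
  qed
qed

lemma pigeon_subseq:
  assumes "infinite {n::nat. \<exists>c\<in>C. P n c}" "finite C"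
  shows "\<exists>c\<in>C. \<exists>g::nat\<Rightarrow>nat. strict_mono g \<and> (\<forall>n. P (g n) c)"
proof -
  have "{n. \<exists>c\<in>C. P n c} = (\<Union>c\<in>C. {n. P n c})" by auto
  then obtain c where c: "c \<in> C" "infinite {n. P n c}" using assms by auto
  show ?thesis
    using strict_mono_enumerate[OF c(2)] enumerate_in_set[OF c(2)]
    by (intro bexI[OF _ c(1)]) blast
qed

definition patQ :: "nat \<Rightarrow> nat \<Rightarrow> nat \<Rightarrow> (nat \<Rightarrow> nat set \<Rightarrow> bool) \<Rightarrow> nat set \<Rightarrow> nat \<Rightarrow> nat
   \<Rightarrow> nat list \<Rightarrow> bool list \<Rightarrow> bool list set \<Rightarrow> (nat \<Rightarrow> nat set \<Rightarrow> bool) \<Rightarrow> bool" where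
  "patQ d K m P Lam i0 k ds cs tab Q \<longleftrightarrow> Lam \<subseteq> {..<K} \<and> i0 \<in> Lam \<and>
     (\<forall>j<k. poly_deg m (Q j) < ds!i0 \<and> deg_le m (Q j) d) \<and>
     length ds = K + k \<and> (\<forall>t<K+k. poly_deg m (if t < K then P t else Q (t - K)) = ds!t) \<and>
     length cs = K + k \<and> (\<forall>t<K+k. (if t < K then P t else Q (t - K)) {} = cs!t) \<and>
     (\<forall>x. x \<subseteq> {..<m} \<longrightarrow> lin_comb Lam P x = (map (\<lambda>j. Q j x) [0..<k] \<in> tab))"

definition patC :: "nat \<Rightarrow> nat \<Rightarrow> nat \<Rightarrow> (nat set \<times> nat \<times> nat \<times> nat list \<times> bool list \<times> bool list set) set" where
  "patC K r d = Pow {..<K} \<times> {..<K} \<times> {..r} \<times> {ds. set ds \<subseteq> {..d} \<and> length ds \<le> K + r}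
      \<times> {cs. set cs \<subseteq> UNIV \<and> length cs \<le> K + r} \<times> Pow {bs. set bs \<subseteq> UNIV \<and> length bs \<le> r}"

lemma finite_patC: "finite (patC K r d)"
  unfolding patC_def
  by (intro finite_cartesian_product finite_Pow_iff[THEN iffD2] finite_lists_length_le) auto

lemma pattern_exists:
  assumes fac: "is_factor d K M m P" and nr: "\<not> factor_regular r K m P"
  shows "\<exists>c\<in>patC K r d. (case c of (Lam, i0, k, ds, cs, tab) \<Rightarrow> \<exists>Q. patQ d K m P Lam i0 k ds cs tab Q)"
proof -
  obtain Lam where Lam: "Lam \<subseteq> {..<K}" "Lam \<noteq> {}"
    "rank_le m (Max ((\<lambda>i. poly_deg m (P i)) ` Lam) - 1) (lin_comb Lam P) r"
    using nr unfolding factor_regular_def by blast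
  define l where "l = Max ((\<lambda>i. poly_deg m (P i)) ` Lam)"
  have finL: "finite Lam" using Lam(1) finite_subset by blast
  have "l \<in> (\<lambda>i. poly_deg m (P i)) ` Lam"
    unfolding l_def using finL Lam(2) by (intro Max_in) auto
  then obtain i0 where i0: "i0 \<in> Lam" "poly_deg m (P i0) = l" by auto
  have i0K: "i0 < K" using i0 Lam(1) by auto
  have l1: "1 \<le> l" "l \<le> d" using factor_degs[OF fac i0K] i0 by auto
  obtain k Q \<Gamma> where kQ: "1 \<le> k" "k \<le> r" "\<forall>j<k. deg_le m (Q j) (l - 1)"
    "\<forall>x. x \<subseteq> {..<m} \<longrightarrow> lin_comb Lam P x = \<Gamma> (\<lambda>j. if j < k then Q j x else False)"
    using Lam(3) unfolding rank_le_def l_def by blast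
  define W where "W t = (if t < K then P t else Q (t - K))" for t
  define ds where "ds = map (\<lambda>t. poly_deg m (W t)) [0..<K+k]"
  define cs where "cs = map (\<lambda>t. W t {}) [0..<K+k]"
  define tab where "tab = {bs. length bs = k \<and> \<Gamma> (\<lambda>j. if j < k then bs!j else False)}"
  have dsi0: "ds!i0 = l" using i0 i0K unfolding ds_def W_def by simp
  have Qd: "\<forall>j<k. poly_deg m (Q j) < ds!i0 \<and> deg_le m (Q j) d"
  proof (intro allI impI conjI)
    fix j assume "j < k"
    then have h: "deg_le m (Q j) (l - 1)" using kQ by blast
    show "poly_deg m (Q j) < ds!i0" using poly_deg_le[OF h] l1 dsi0 by linarith
    show "deg_le m (Q j) d" using deg_le_mono[OF h] l1 by simp
  qed
  have pq: "patQ d K m P Lam i0 k ds cs tab Q"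
    unfolding patQ_def
  proof (intro conjI allI impI)
    fix x assume x: "x \<subseteq> {..<m}"
    have "(\<lambda>j. if j < k then map (\<lambda>j. Q j x) [0..<k] ! j else False) = (\<lambda>j. if j < k then Q j x else False)"
      by auto
    then show "lin_comb Lam P x = (map (\<lambda>j. Q j x) [0..<k] \<in> tab)"
      using kQ(4) x unfolding tab_def by simp
  qed (use Lam i0 Qd in \<open>auto simp: ds_def cs_def W_def\<close>)
  have dsd: "set ds \<subseteq> {..d}"
  proof
    fix a assume "a \<in> set ds"
    then obtain t where t: "t < K + k" "a = poly_deg m (W t)" unfolding ds_def by auto
    show "a \<in> {..d}"
    proof (cases "t < K")
      case True then show ?thesis using factor_degs[OF fac True] t by (simp add: W_def)
    next
      case False
      then have "t - K < k" using t by simp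
      then show ?thesis using Qd dsi0 l1 t False by (fastforce simp: W_def)
    qed
  qed
  have "(Lam, i0, k, ds, cs, tab) \<in> patC K r d"
    unfolding patC_def using Lam(1) i0K kQ(2) dsd by (auto simp: ds_def cs_def tab_def)
  then show ?thesis using pq by fastforce
qed

lemma odd_card_remove:
  assumes "finite A" "a \<in> A"
  shows "odd (card {i\<in>A. P i}) = (odd (card {i\<in>A - {a}. P i}) \<noteq> P a)"
proof (cases "P a")
  case True
  have "{i\<in>A. P i} = insert a {i\<in>A - {a}. P i}" using True assms by auto
  then show ?thesis using True assms by simp
next
  case False
  have "{i\<in>A. P i} = {i\<in>A - {a}. P i}" using False by auto
  then show ?thesis using False by simp
qed

lemma step:
  assumes fac: "\<forall>n. is_factor d K M (mF n) (F n)"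
    and inf: "infinite {n. \<not> factor_regular r K (mF n) (F n)}"
  shows "\<exists>L' M' mH H. (\<forall>n. is_factor d L' M' (mH n) (H n)) \<and> dm d M' < dm d M \<and>
           refines L' mH H K mF F"
proof -
  have "infinite {n. \<exists>c\<in>patC K r d. (case c of (Lam, i0, k, ds, cs, tab) \<Rightarrow>
          \<exists>Q. patQ d K (mF n) (F n) Lam i0 k ds cs tab Q)}"
    by (rule infinite_super[OF _ inf]) (use pattern_exists fac in blast)
  from pigeon_subseq[OF this finite_patC] obtain c and g :: "nat \<Rightarrow> nat" where
    cg: "c \<in> patC K r d" "strict_mono g"
    "\<forall>n. (case c of (Lam, i0, k, ds, cs, tab) \<Rightarrow> \<exists>Q. patQ d K (mF (g n)) (F (g n)) Lam i0 k ds cs tab Q)"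
    by (elim bexE exE conjE) (rule that; assumption)
  obtain Lam i0 k ds cs tab where c: "c = (Lam, i0, k, ds, cs, tab)" by (cases c) blast
  have "\<forall>n. \<exists>Q. patQ d K (mF (g n)) (F (g n)) Lam i0 k ds cs tab Q" using cg(3) c by simp
  from choice[OF this] obtain Qf where Qf: "\<forall>n. patQ d K (mF (g n)) (F (g n)) Lam i0 k ds cs tab (Qf n)"
    by blast
  have Lam: "Lam \<subseteq> {..<K}" "i0 \<in> Lam" using Qf unfolding patQ_def by auto
  have i0K: "i0 < K" using Lam by auto
  have finLam: "finite Lam" using Lam(1) finite_subset by blast
  have Qd: "\<And>n j. j < k \<Longrightarrow> poly_deg (mF (g n)) (Qf n j) < ds!i0 \<and> deg_le (mF (g n)) (Qf n j) d"
    using Qf unfolding patQ_def by blast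
  have lends: "length ds = K + k" "length cs = K + k" using Qf unfolding patQ_def by auto
  define Wn where "Wn n t = (if t < K then F (g n) t else Qf n (t - K))" for n t
  have dsW: "\<And>n t. t < K + k \<Longrightarrow> poly_deg (mF (g n)) (Wn n t) = ds!t"
    using Qf unfolding patQ_def Wn_def by blast
  have csW: "\<And>n t. t < K + k \<Longrightarrow> Wn n t {} = cs!t"
    using Qf unfolding patQ_def Wn_def by blast
  have lc: "\<And>n x. x \<subseteq> {..<mF (g n)} \<Longrightarrow> lin_comb Lam (F (g n)) x = (map (\<lambda>j. Qf n j x) [0..<k] \<in> tab)"
    using Qf unfolding patQ_def by blast
  have Wd: "\<And>n t. t < K + k \<Longrightarrow> deg_le (mF (g n)) (Wn n t) d"
  proof -
    fix n t assume t: "t < K + k"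
    show "deg_le (mF (g n)) (Wn n t) d"
    proof (cases "t < K")
      case True
      have "is_factor d K M (mF (g n)) (F (g n))" using fac by blast
      then show ?thesis using True unfolding Wn_def is_factor_def by simp
    next
      case False then show ?thesis using Qd[of "t - K" n] t unfolding Wn_def by auto
    qed
  qed
  have dsK: "\<And>t. t < K \<Longrightarrow> 1 \<le> ds!t"
  proof -
    fix t assume t: "t < K"
    have "1 \<le> poly_deg (mF (g 0)) (F (g 0) t)" using factor_degs[OF _ t] fac by blast
    then show "1 \<le> ds!t" using dsW[of t 0] t unfolding Wn_def by simp
  qed
  define S where "S = {t. t < K + k \<and> t \<noteq> i0 \<and> 1 \<le> ds!t}"
  have finS: "finite S" unfolding S_def by simp
  define sl where "sl = sorted_list_of_set S"
  define L' where "L' = length sl"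
  have sl: "set sl = S" "distinct sl" using finS unfolding sl_def by auto
  have slS: "\<And>j. j < L' \<Longrightarrow> sl!j \<in> S" using sl unfolding L'_def by (metis nth_mem)
  define mH where "mH n = mF (g n)" for n
  define H where "H n j = Wn n (sl!j)" for n j
  define M' where "M' l = card {j. j < L' \<and> ds!(sl!j) = l}" for l
  have degH: "poly_deg (mH n) (H n j) = ds!(sl!j)" if j: "j < L'" for n j
  proof -
    have "sl!j < K + k" using slS[OF j] unfolding S_def by simp
    then show ?thesis unfolding H_def mH_def by (rule dsW)
  qed
  have facH: "\<forall>n. is_factor d L' M' (mH n) (H n)"
  proof
    fix n
    have "is_factor d L' (\<lambda>l. card {i. i < L' \<and> poly_deg (mH n) (H n i) = l}) (mH n) (H n)"
    proof (rule factor_intro, intro allI impI conjI)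
      fix i assume i: "i < L'"
      show "deg_le (mH n) (H n i) d" using Wd slS[OF i] unfolding S_def H_def mH_def by blast
      show "1 \<le> poly_deg (mH n) (H n i)" using degH[OF i] slS[OF i] unfolding S_def by simp
    qed
    moreover have "(\<lambda>l. card {i. i < L' \<and> poly_deg (mH n) (H n i) = l}) = M'"
      unfolding M'_def by (intro ext arg_cong[where f=card] Collect_cong) (use degH in auto)
    ultimately show "is_factor d L' M' (mH n) (H n)" by simp
  qed
  have dm': "dm d M' = image_mset (nth ds) (mset_set S)"
  proof -
    have "dm d M' = image_mset (\<lambda>j. poly_deg (mH 0) (H 0 j)) (mset_set {..<L'})"
      using factor_dm[of d L' M' "mH 0" "H 0"] facH by simp
    also have "\<dots> = image_mset (\<lambda>j. ds!(sl!j)) (mset_set {..<L'})"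
      by (intro image_mset_cong) (use degH in auto)
    also have "\<dots> = image_mset (nth ds) (image_mset (nth sl) (mset_set {..<L'}))"
      by (simp add: multiset.map_comp comp_def)
    also have "image_mset (nth sl) (mset_set {..<L'}) = mset sl"
    proof -
      have "mset sl = mset (map (nth sl) [0..<L'])" unfolding L'_def by (simp add: map_nth)
      also have "\<dots> = image_mset (nth sl) (mset_set {..<L'})" by (simp add: atLeast0LessThan)
      finally show ?thesis by simp
    qed
    also have "mset sl = mset_set S" unfolding sl_def
      by (metis mset_sorted_list_of_multiset sorted_list_of_mset_set)
    finally show ?thesis .
  qed
  have dmM: "dm d M = image_mset (nth ds) (mset_set {..<K})"
  proof -
    have "dm d M = image_mset (\<lambda>i. poly_deg (mF (g 0)) (F (g 0) i)) (mset_set {..<K})"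
      using factor_dm[of d K M "mF (g 0)" "F (g 0)"] fac by simp
    also have "\<dots> = image_mset (nth ds) (mset_set {..<K})"
    proof (intro image_mset_cong)
      fix i assume "i \<in># mset_set {..<K}"
      then have i: "i < K" by simp
      then have "poly_deg (mF (g 0)) (Wn 0 i) = ds!i" by (intro dsW) simp
      then show "poly_deg (mF (g 0)) (F (g 0) i) = ds!i" using i by (simp add: Wn_def)
    qed
    finally show ?thesis .
  qed
  define T where "T = {t. K \<le> t \<and> t < K + k \<and> 1 \<le> ds!t}"
  have ST: "S = ({..<K} - {i0}) \<union> T" unfolding S_def T_def using dsK i0K by auto
  have "mset_set S = mset_set ({..<K} - {i0}) + mset_set T"
    unfolding ST by (rule mset_set_Union) (auto simp: T_def)
  then have A: "dm d M' = image_mset (nth ds) (mset_set ({..<K} - {i0})) + image_mset (nth ds) (mset_set T)"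
    using dm' by simp
  have "mset_set {..<K} = mset_set ({..<K} - {i0}) + mset_set {i0}"
  proof -
    have "{..<K} = ({..<K} - {i0}) \<union> {i0}" using i0K by auto
    moreover have "mset_set (({..<K} - {i0}) \<union> {i0}) = mset_set ({..<K} - {i0}) + mset_set {i0}"
      by (rule mset_set_Union) auto
    ultimately show ?thesis by simp
  qed
  then have B: "dm d M = image_mset (nth ds) (mset_set ({..<K} - {i0})) + {#ds!i0#}"
    using dmM by simp
  have Tlt: "\<forall>a\<in>#image_mset (nth ds) (mset_set T). \<exists>b\<in>#{#ds!i0#}. a < b"
  proof
    fix a assume "a \<in># image_mset (nth ds) (mset_set T)"
    then obtain t where t: "t \<in> T" "a = ds!t" by (auto simp: T_def)
    then have "t - K < k" "\<not> t < K" unfolding T_def by auto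
    then have "poly_deg (mF (g 0)) (Qf 0 (t - K)) < ds!i0" using Qd by blast
    moreover have "poly_deg (mF (g 0)) (Qf 0 (t - K)) = ds!t"
      using dsW[of t 0] t \<open>\<not> t < K\<close> unfolding T_def Wn_def by simp
    ultimately show "\<exists>b\<in>#{#ds!i0#}. a < b" using t by simp
  qed
  have dmlt: "dm d M' < dm d M"
    unfolding A B less_multiset_def by (rule one_step_implies_multp[OF _ Tlt]) simp
  define wv where "wv hv t = (if t \<in> S then hv (SOME j. j < L' \<and> sl!j = t) else cs!t)"
    for hv :: "nat \<Rightarrow> bool" and t
  define \<Gamma> where "\<Gamma> hv i = (if i = i0 then (odd (card {i'\<in>Lam - {i0}. wv hv i'}) \<noteq>
      (map (\<lambda>j. wv hv (K + j)) [0..<k] \<in> tab)) else wv hv i)" for hv i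
  have ref: "refines L' mH H K mF F"
    unfolding refines_def
  proof (intro exI[of _ g] exI[of _ \<Gamma>] conjI allI impI cg(2))
    fix n show "mH n = mF (g n)" by (simp add: mH_def)
  next
    fix n x i assume x: "x \<subseteq> {..<mH n}" and i: "i < K"
    define hv where "hv = (\<lambda>j. if j < L' then H n j x else False)"
    have wvW: "wv hv t = Wn n t x" if t: "t < K + k" "t \<noteq> i0" for t
    proof (cases "t \<in> S")
      case True
      then have "\<exists>j. j < L' \<and> sl!j = t" using sl unfolding L'_def by (metis in_set_conv_nth)
      then have j: "(SOME j. j < L' \<and> sl!j = t) < L' \<and> sl!(SOME j. j < L' \<and> sl!j = t) = t"
        by (rule someI_ex)
      then show ?thesis using True unfolding wv_def hv_def H_def by simp
    next
      case False
      then have "ds!t = 0" using t unfolding S_def by simp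
      then have "poly_deg (mF (g n)) (Wn n t) = 0" using dsW t by simp
      then have "deg_le (mF (g n)) (Wn n t) 0" using deg_le_poly_deg[OF Wd[OF t(1), of n]] by simp
      then have "Wn n t x = Wn n t {}" using deg0_const x unfolding mH_def by blast
      then show ?thesis using False csW t unfolding wv_def by simp
    qed
    show "F (g n) i x = \<Gamma> hv i"
    proof (cases "i = i0")
      case False
      then show ?thesis using wvW[of i] i unfolding \<Gamma>_def Wn_def by simp
    next
      case True
      have e1: "{i'\<in>Lam - {i0}. wv hv i'} = {i'\<in>Lam - {i0}. F (g n) i' x}"
        using wvW Lam(1) unfolding Wn_def by force
      have e2: "map (\<lambda>j. wv hv (K + j)) [0..<k] = map (\<lambda>j. Qf n j x) [0..<k]"
        using wvW i0K unfolding Wn_def by simp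
      have "lin_comb Lam (F (g n)) x = (map (\<lambda>j. Qf n j x) [0..<k] \<in> tab)"
        using lc x unfolding mH_def by blast
      moreover have "lin_comb Lam (F (g n)) x = (odd (card {i'\<in>Lam - {i0}. F (g n) i' x}) \<noteq> F (g n) i0 x)"
        unfolding lin_comb_def by (rule odd_card_remove[OF finLam Lam(2)])
      moreover have "\<Gamma> hv i0 = (odd (card {i'\<in>Lam - {i0}. F (g n) i' x}) \<noteq> (map (\<lambda>j. Qf n j x) [0..<k] \<in> tab))"
        unfolding \<Gamma>_def e1 e2 by simp
      ultimately show ?thesis using True by blast
    qed
  qed
  show ?thesis using facH dmlt ref by blast
qed

lemma main:
  fixes D :: "nat multiset"
  shows "\<forall>K M (mF :: nat \<Rightarrow> nat) F. (\<forall>n::nat. is_factor d K M (mF n) (F n)) \<longrightarrow> dm d M = D \<longrightarrow>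
    (\<exists>L M' mH H. (\<forall>n. is_factor d L M' (mH n) (H n)) \<and> fully_regular L mH H \<and> refines L mH H K mF F)"
proof (induction D rule: less_induct)
  case (less D)
  show ?case
  proof (intro allI impI)
    fix K M and mF :: "nat \<Rightarrow> nat" and F :: "nat \<Rightarrow> nat \<Rightarrow> nat set \<Rightarrow> bool"
    assume fac: "\<forall>n. is_factor d K M (mF n) (F n)" and D: "dm d M = D"
    show "\<exists>L M' mH H. (\<forall>n. is_factor d L M' (mH n) (H n)) \<and> fully_regular L mH H \<and> refines L mH H K mF F"
    proof (cases "fully_regular K mF F")
      case True then show ?thesis using fac refines_refl by blast
    next
      case False
      then obtain r where "\<not> seq_regular r K mF F" unfolding fully_regular_def by blast
      then have "\<forall>N0. \<exists>n\<ge>N0. \<not> factor_regular r K (mF n) (F n)" unfolding seq_regular_def by blast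
      then have inf: "infinite {n. \<not> factor_regular r K (mF n) (F n)}"
        by (simp add: infinite_nat_iff_unbounded_le)
      obtain L' M' mH H where h: "\<forall>n. is_factor d L' M' (mH n) (H n)" "dm d M' < dm d M"
        "refines L' mH H K mF F" using step[OF fac inf] by blast
      obtain L'' M'' mH' H' where h2: "\<forall>n. is_factor d L'' M'' (mH' n) (H' n)" "fully_regular L'' mH' H'"
        "refines L'' mH' H' L' mH H"
        using less.IH[of "dm d M'"] h(1,2) D by blast
      show ?thesis using h2 refines_trans[OF h2(3) h(3)] by blast
    qed
  qed
qed

theorem lemmaA3:
  fixes d K :: nat and M :: "nat \<Rightarrow> nat" and mF :: "nat \<Rightarrow> nat"
    and F :: "nat \<Rightarrow> nat \<Rightarrow> nat set \<Rightarrow> bool"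
  assumes "d \<ge> 1"
    and "\<forall>n. is_factor d K M (mF n) (F n)"
  shows "\<exists>L M' mH H. (\<forall>n. is_factor d L M' (mH n) (H n)) \<and>
           fully_regular L mH H \<and> refines L mH H K mF F"
  using main assms(2) by blast

end
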